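(* Let $\{\mu_t\}$ be a free convolution semigroup and let $\{V_n(x,t)\}_{n\ge1}$ be a family of fluctuation polynomials for $\{\mu_t\}$, i.e. for each $n\ge1$, $\partial_xV_n(x,t)$ is a martingale polynomial for $\{\mu_t\}$ of degree $n-1$. Then for each $t\in\mathbb R_+$, $\{1\}\cup\{V_n(\cdot,t)\}_{n\ge1}$ is a basis of $\mathbb C[x]$. Let $\{V_n^\ast(t)\}_{n\ge1}\subset\mathcal M_0$ be the dual family, determined by $\langle V_n^\ast(t),1\rangle=0$ and $\langle V_n^\ast(t),V_k(\cdot,t)\rangle=\delta_{nk}$. Then for all $n\ge1$ and $s,t\ge0$, $D_{\mu_s}C_t(V_n^\ast(s))=V_n^\ast(t+s)$.
   Context: $\mathcal M$ is the space of linear functionals on $\mathbb C[x]$ with the weak-$*$ topology (convergence of every moment), $\mathcal M_1=\{\nu:\langle\nu,1\rangle=1\}$, $\mathcal M_0=\{\nu:\langle\nu,1\rangle=0\}$. For unital $\nu$: $G_\nu(z)=\sum\langle\nu,x^n\rangle z^{-(n+1)}$, $K_\nu$ its compositional inverse, $R_\nu=K_\nu-\frac1z$; $\boxplus$ on $\mathcal M_1$ is defined by $R_{\mu\boxplus\nu}=R_\mu+R_\nu$. $\mu$ is a freely infinitely divisible probability measure with all moments finite and $\{\mu_t\}$ the free convolution semigroup with $\mu_1=\mu$, $R_{\mu_t}=tR_\mu$. $C_t(\tau)=\mu_t\boxplus\tau$ and $D_\tau C_t(\nu)=\lim_{\varepsilon\to0}\frac1\varepsilon(C_t(\tau+\varepsilon\nu)-C_t(\tau))$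 (weak-$*$ limit) for $\tau\in\mathcal M_1$, $\nu\in\mathcal M_0$. Martingale polynomial: $p(x,t)$ polynomial in $x$ with $\mathcal K_{s,t}(p(\cdot,t))=p(\cdot,s)$ for $s<t$, where $\mathcal K_{s,t}$ is the linear operator on $\mathbb C[x]$ determined coefficientwise (as formal series in $z^{-1}$) by $\mathcal K_{s,t}(\mathrm{Res}_z)=\mathrm{Res}_{F_{s,t}(z)}$, $\mathrm{Res}_z(x)=\frac1{z-x}$, $F_{s,t}=K_{\mu_s}\circ G_{\mu_t}$. *)

theory Defs
  imports "HOL-Probability.Probability" "HOL-Computational_Algebra.Computational_Algebra"
begin

text \<open>Linear functionals on C[x] are represented by their moment sequences
  nu :: nat => complex, nu k = <nu, x^k>.  The pairing with a polynomial:\<close>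

type_synonym functional = "nat \<Rightarrow> complex"

definition pair :: "functional \<Rightarrow> complex poly \<Rightarrow> complex" where
  "pair nu p = (\<Sum>i\<le>degree p. coeff p i * nu i)"

text \<open>All formal series below are in the variable w = 1/z.
  G_nu(z) = sum nu n z^-(n+1) corresponds to the fps gfps nu = w * M_nu(w).\<close>

definition gfps :: "functional \<Rightarrow> complex fps" where
  "gfps nu = fps_X * Abs_fps nu"

text \<open>R-transform: R_nu = K_nu - 1/z where K_nu is the compositional inverse of G_nu.
  Composing with G_nu: R_nu(G_nu(z)) = z - 1/G_nu(z), i.e. in w:
  (R_nu oo g)(w) = 1/w - 1/(w M(w)) = (1 - 1/M(w))/w.\<close>

definition Rtr :: "functional \<Rightarrow> complex fps" where
  "Rtr nu = fps_shift 1 (1 - inverse (Abs_fps nu)) oo fps_inv (gfps nu)"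

definition fconv :: "functional \<Rightarrow> functional \<Rightarrow> functional" where
  "fconv tau nu = (THE lam. lam 0 = 1 \<and> Rtr lam = Rtr tau + Rtr nu)"

definition mom :: "real measure \<Rightarrow> functional" where
  "mom M n = complex_of_real (\<integral>x. x ^ n \<partial>M)"

text \<open>F_{s,t} = K_{mu_s} o G_{mu_t}, with K_{mu_s}(u) = 1/u + R_{mu_s}(u).
  As a Laurent series in w: F = (1/w) * (1/M_t(w)) + R_s(G_t).  We store w*F:\<close>

definition wF :: "functional \<Rightarrow> functional \<Rightarrow> complex fps" where
  "wF ms mt = inverse (Abs_fps mt) + fps_X * (Rtr ms oo gfps mt)"

text \<open>Res_{F(z)}(x) = 1/(F(z) - x) = w / (wF - w x), a series in w with
  coefficients in C[x]; the coefficient of z^-(k+1) = w^(k+1) is the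
  coefficient of w^k of (wF - w x)^-1 (whose constant term is 1).\<close>

definition resF :: "functional \<Rightarrow> functional \<Rightarrow> complex poly fps" where
  "resF ms mt = fps_right_inverse
     (Abs_fps (\<lambda>n. [:wF ms mt $ n:]) - fps_X * fps_const [:0, 1:]) 1"

definition Kop :: "functional \<Rightarrow> functional \<Rightarrow> complex poly \<Rightarrow> complex poly" where
  "Kop ms mt p = (\<Sum>i\<le>degree p. smult (coeff p i) (resF ms mt $ i))"

definition martingale_poly :: "(real \<Rightarrow> functional) \<Rightarrow> (real \<Rightarrow> complex poly) \<Rightarrow> bool" where
  "martingale_poly m p \<longleftrightarrow>
     (\<forall>s t. 0 \<le> s \<longrightarrow> s < t \<longrightarrow> Kop (m s) (m t) (p t) = p s)"

definition is_basis_family :: "(nat \<Rightarrow> complex poly) \<Rightarrow> bool" where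
  "is_basis_family B \<longleftrightarrow>
     (\<forall>q. \<exists>c N. q = (\<Sum>k\<le>N. smult (c k) (B k))) \<and>
     (\<forall>c N. (\<Sum>k\<le>N. smult (c k) (B k)) = 0 \<longrightarrow> (\<forall>k\<le>N. c k = 0))"

end

theory Submission
  imports Defs
begin

unbundle no vec_syntax

definition dfps :: "(complex \<Rightarrow> complex fps) \<Rightarrow> complex fps \<Rightarrow> bool" where
  "dfps F D \<longleftrightarrow> (\<forall>n. ((\<lambda>e. F e $ n) has_field_derivative D $ n) (at 0))"

definition dex :: "(complex \<Rightarrow> complex fps) \<Rightarrow> bool" where
  "dex F \<longleftrightarrow> (\<forall>n. \<exists>d. ((\<lambda>e. F e $ n) has_field_derivative d) (at 0))"

lemma dex_dfps: "dex F \<Longrightarrow> \<exists>D. dfps F D"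
proof -
  assume "dex F"
  then obtain d where "\<And>n. ((\<lambda>e. F e $ n) has_field_derivative d n) (at 0)"
    unfolding dex_def by metis
  then show ?thesis unfolding dfps_def by (intro exI[of _ "Abs_fps d"]) simp
qed

lemma dfps_dex: "dfps F D \<Longrightarrow> dex F"
  unfolding dfps_def dex_def by blast

lemma dfps_unique: "dfps F D \<Longrightarrow> dfps F E \<Longrightarrow> D = E"
  unfolding dfps_def by (metis DERIV_unique fps_ext)

lemma dfps_const: "dfps (\<lambda>e. C) 0"
  unfolding dfps_def by simp

lemma dfps_lin: "dfps (\<lambda>e. A + fps_const e * B) B"
  unfolding dfps_def by (auto intro!: derivative_eq_intros)

lemma dfps_add: "dfps F D \<Longrightarrow> dfps G E \<Longrightarrow> dfps (\<lambda>e. F e + G e) (D + E)"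
  unfolding dfps_def by (auto intro!: derivative_eq_intros)

lemma dfps_diff: "dfps F D \<Longrightarrow> dfps G E \<Longrightarrow> dfps (\<lambda>e. F e - G e) (D - E)"
  unfolding dfps_def by (auto intro!: derivative_eq_intros)

lemma dfps_shift: "dfps F D \<Longrightarrow> dfps (\<lambda>e. fps_shift k (F e)) (fps_shift k D)"
  unfolding dfps_def by simp

lemma dfps_mult: "dfps F D \<Longrightarrow> dfps G E \<Longrightarrow> dfps (\<lambda>e. F e * G e) (D * G 0 + F 0 * E)"
  unfolding dfps_def fps_mult_nth fps_add_nth
  by (auto intro!: derivative_eq_intros simp: sum.distrib[symmetric] intro!: sum.cong)

lemma dfps_power: "dfps F D \<Longrightarrow> dfps (\<lambda>e. F e ^ i) (of_nat i * F 0 ^ (i - 1) * D)"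
proof (induction i)
  case 0
  then show ?case using dfps_const[of 1] by simp
next
  case (Suc i)
  have "dfps (\<lambda>e. F e * F e ^ i) (D * F 0 ^ i + F 0 * (of_nat i * F 0 ^ (i - 1) * D))"
    using dfps_mult[OF Suc.prems Suc.IH[OF Suc.prems]] .
  moreover have "D * F 0 ^ i + F 0 * (of_nat i * F 0 ^ (i - 1) * D) = of_nat (Suc i) * F 0 ^ (Suc i - 1) * D"
    by (cases i) (simp_all add: algebra_simps)
  ultimately show ?case by simp
qed

lemma dex_iff: "dex F \<longleftrightarrow> (\<forall>n. (\<lambda>e. F e $ n) field_differentiable (at 0))"
  unfolding dex_def field_differentiable_def by simp

lemma dex_mult: "dex F \<Longrightarrow> dex G \<Longrightarrow> dex (\<lambda>e. F e * G e)"
proof -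
  assume "dex F" "dex G"
  then obtain D E where "dfps F D" "dfps G E" using dex_dfps by metis
  then show ?thesis using dfps_dex dfps_mult by metis
qed

lemma dex_power: "dex F \<Longrightarrow> dex (\<lambda>e. F e ^ i)"
proof -
  assume "dex F"
  then obtain D where "dfps F D" using dex_dfps by metis
  then show ?thesis using dfps_dex dfps_power by metis
qed

lemma dex_inverse:
  fixes F :: "complex \<Rightarrow> complex fps"
  assumes F0: "\<And>e. F e $ 0 = 1" and d: "dex F"
  shows "dex (\<lambda>e. inverse (F e))"
proof -
  have "(\<lambda>e. inverse (F e) $ n) field_differentiable (at 0)" for n
  proof (induction n rule: less_induct)
    case (less n)
    show ?case
    proof (cases n)
      case 0
      then show ?thesis using F0 by simp
    next
      case (Suc m)
      have eq: "(\<lambda>e. inverse (F e) $ n) = (\<lambda>e. - (\<Sum>i=1..n. F e $ i * inverse (F e) $ (n - i)))"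
        using Suc F0 by (simp add: fps_inverse_def fps_right_inverse_constructor_rec del: fps_right_inverse_constructor.simps)
      show ?thesis unfolding eq
        apply (intro field_differentiable_minus field_differentiable_sum field_differentiable_mult)
        using d less Suc by (auto simp: dex_iff)
    qed
  qed
  then show ?thesis by (simp add: dex_iff)
qed

lemma dex_fps_inv:
  fixes F :: "complex \<Rightarrow> complex fps"
  assumes F0: "\<And>e. F e $ 0 = 0" and F1: "\<And>e. F e $ 1 = 1" and d: "dex F"
  shows "dex (\<lambda>e. fps_inv (F e))"
proof -
  have dp: "(\<lambda>e. (F e ^ i) $ k) field_differentiable (at 0)" for i k
    using dex_power[OF d] by (simp add: dex_iff)
  have "(\<lambda>e. fps_inv (F e) $ n) field_differentiable (at 0)" for n
  proof (induction n rule: less_induct)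
    case (less n)
    show ?case
    proof (cases n)
      case 0
      then show ?thesis by (simp add: fps_inv_def)
    next
      case (Suc m)
      have eq: "(\<lambda>e. fps_inv (F e) $ n) = (\<lambda>e. fps_X $ Suc m - (\<Sum>i=0..m. fps_inv (F e) $ i * (F e ^ i) $ Suc m))"
        using Suc F1 by (simp add: fps_inv_def)
      show ?thesis unfolding eq
        apply (intro field_differentiable_diff field_differentiable_const field_differentiable_sum field_differentiable_mult)
        using less Suc dp by auto
    qed
  qed
  then show ?thesis by (simp add: dex_iff)
qed

lemma dfps_inverse:
  fixes F :: "complex \<Rightarrow> complex fps"
  assumes F0: "\<And>e. F e $ 0 = 1" and d: "dfps F D"
  shows "dfps (\<lambda>e. inverse (F e)) (- D * inverse (F 0) ^ 2)"
proof -
  obtain D' where D': "dfps (\<lambda>e. inverse (F e)) D'"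
    using dex_dfps dex_inverse[OF F0 dfps_dex[OF d]] by blast
  have "dfps (\<lambda>e. F e * inverse (F e)) (D * inverse (F 0) + F 0 * D')"
    by (rule dfps_mult[OF d D'])
  moreover have "(\<lambda>e. F e * inverse (F e)) = (\<lambda>e. 1)"
    using F0 by (simp add: inverse_mult_eq_1')
  ultimately have "D * inverse (F 0) + F 0 * D' = 0"
    using dfps_unique dfps_const by metis
  then have "inverse (F 0) * (D * inverse (F 0) + F 0 * D') = 0" by simp
  moreover have "inverse (F 0) * F 0 = 1" using F0[of 0] by (simp add: inverse_mult_eq_1)
  ultimately have "D' + D * inverse (F 0) ^ 2 = 0"
    by (simp add: algebra_simps power2_eq_square)
  then have "D' = - D * inverse (F 0) ^ 2"
    by (simp add: eq_neg_iff_add_eq_0)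
  then show ?thesis using D' by simp
qed

lemma compose_mult_nth:
  fixes B G E :: "complex fps"
  assumes G0: "G $ 0 = 0"
  shows "((B oo G) * E) $ n = (\<Sum>i=0..n. B $ i * (G ^ i * E) $ n)"
proof -
  have "((B oo G) * E) $ n = (\<Sum>p=0..n. (\<Sum>i=0..p. B $ i * (G ^ i) $ p) * E $ (n - p))"
    by (simp add: fps_mult_nth fps_compose_nth)
  also have "\<dots> = (\<Sum>p=0..n. (\<Sum>i=0..n. B $ i * (G ^ i) $ p) * E $ (n - p))"
  proof (intro sum.cong refl)
    fix p assume p: "p \<in> {0..n}"
    have "(\<Sum>i=0..p. B $ i * (G ^ i) $ p) = (\<Sum>i=0..n. B $ i * (G ^ i) $ p)"
      by (rule sum.mono_neutral_left) (use p startsby_zero_power_prefix[OF G0] in auto)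
    then show "(\<Sum>i=0..p. B $ i * (G ^ i) $ p) * E $ (n - p) = (\<Sum>i=0..n. B $ i * (G ^ i) $ p) * E $ (n - p)"
      by simp
  qed
  also have "\<dots> = (\<Sum>p=0..n. \<Sum>i=0..n. B $ i * ((G ^ i) $ p * E $ (n - p)))"
    by (simp add: sum_distrib_right mult.assoc)
  also have "\<dots> = (\<Sum>i=0..n. \<Sum>p=0..n. B $ i * ((G ^ i) $ p * E $ (n - p)))"
    by (rule sum.swap)
  also have "\<dots> = (\<Sum>i=0..n. B $ i * (G ^ i * E) $ n)"
    by (simp add: fps_mult_nth sum_distrib_left)
  finally show ?thesis .
qed

lemma power_mult_nth_zero:
  fixes G E :: "complex fps"
  assumes G0: "G $ 0 = 0" and E0: "E $ 0 = 0"
  shows "(G ^ n * E) $ n = 0"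
  unfolding fps_mult_nth
proof (rule sum.neutral, rule ballI)
  fix p assume "p \<in> {0..n}"
  then consider "p < n" | "p = n" by fastforce
  then show "(G ^ n) $ p * E $ (n - p) = 0"
    by cases (use startsby_zero_power_prefix[OF G0] E0 in auto)
qed

lemma dfps_const_nth:
  fixes F :: "complex \<Rightarrow> complex fps"
  assumes "dfps F D" "\<And>e. F e $ k = c"
  shows "D $ k = 0"
proof -
  have "((\<lambda>e. F e $ k) has_field_derivative D $ k) (at 0)" using assms(1) by (simp add: dfps_def)
  moreover have "(\<lambda>e. F e $ k) = (\<lambda>e. c)" using assms(2) by simp
  ultimately show ?thesis using DERIV_unique DERIV_const by metis
qed

lemma dfps_compose:
  fixes F G :: "complex \<Rightarrow> complex fps"
  assumes G0: "\<And>e. G e $ 0 = 0" and dF: "dfps F D" and dG: "dfps G E"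
  shows "dfps (\<lambda>e. F e oo G e) ((D oo G 0) + (fps_deriv (F 0) oo G 0) * E)"
  unfolding dfps_def
proof
  fix n
  have E0: "E $ 0 = 0" using dfps_const_nth[OF dG G0] .
  have dP: "dfps (\<lambda>e. G e ^ i) (of_nat i * G 0 ^ (i - 1) * E)" for i
    by (rule dfps_power[OF dG])
  have "((\<lambda>e. \<Sum>i=0..n. F e $ i * (G e ^ i) $ n) has_field_derivative
      (\<Sum>i=0..n. D $ i * (G 0 ^ i) $ n + F 0 $ i * (of_nat i * G 0 ^ (i - 1) * E) $ n)) (at 0)"
    using dF dP unfolding dfps_def by (auto intro!: derivative_eq_intros sum.cong simp: mult.commute)
  moreover have "(\<Sum>i=0..n. D $ i * (G 0 ^ i) $ n + F 0 $ i * (of_nat i * G 0 ^ (i - 1) * E) $ n)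
      = ((D oo G 0) + (fps_deriv (F 0) oo G 0) * E) $ n"
  proof -
    have "(\<Sum>i=0..n. F 0 $ i * (of_nat i * G 0 ^ (i - 1) * E) $ n) = (\<Sum>i=0..n. fps_deriv (F 0) $ i * (G 0 ^ i * E) $ n)"
    proof (cases n)
      case 0
      then show ?thesis using E0 by simp
    next
      case (Suc m)
      have "(\<Sum>i=0..n. F 0 $ i * (of_nat i * G 0 ^ (i - 1) * E) $ n) = (\<Sum>i=0..m. F 0 $ Suc i * (of_nat (Suc i) * G 0 ^ i * E) $ n)"
        unfolding Suc sum.atLeast0_atMost_Suc_shift by simp
      also have "\<dots> = (\<Sum>i=0..m. fps_deriv (F 0) $ i * (G 0 ^ i * E) $ n)"
        by (intro sum.cong refl) (simp add: fps_deriv_nth mult.assoc fps_of_nat del: of_nat_Suc)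
      also have "\<dots> = (\<Sum>i=0..n. fps_deriv (F 0) $ i * (G 0 ^ i * E) $ n)"
        unfolding Suc sum.atLeast0_atMost_Suc using power_mult_nth_zero[OF G0[of 0] E0, of "Suc m"] by simp
      finally show ?thesis .
    qed
    then show ?thesis
      by (simp add: compose_mult_nth[OF G0] fps_compose_nth sum.distrib)
  qed
  ultimately show "((\<lambda>e. (F e oo G e) $ n) has_field_derivative ((D oo G 0) + (fps_deriv (F 0) oo G 0) * E) $ n) (at 0)"
    by (simp add: fps_compose_nth)
qed

lemma dfps_fps_inv:
  fixes F :: "complex \<Rightarrow> complex fps"
  assumes F0: "\<And>e. F e $ 0 = 0" and F1: "\<And>e. F e $ 1 = 1" and d: "dfps F D"
  shows "\<exists>D'. dfps (\<lambda>e. fps_inv (F e)) D' \<and>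
           (D oo fps_inv (F 0)) + (fps_deriv (F 0) oo fps_inv (F 0)) * D' = 0"
proof -
  obtain D' where D': "dfps (\<lambda>e. fps_inv (F e)) D'"
    using dex_dfps dex_fps_inv[OF F0 F1 dfps_dex[OF d]] by blast
  have I0: "\<And>e. fps_inv (F e) $ 0 = 0" by (simp add: fps_inv_def)
  have "dfps (\<lambda>e. F e oo fps_inv (F e)) ((D oo fps_inv (F 0)) + (fps_deriv (F 0) oo fps_inv (F 0)) * D')"
    by (rule dfps_compose[OF I0 d D'])
  moreover have "(\<lambda>e. F e oo fps_inv (F e)) = (\<lambda>e. fps_X)"
    using F0 F1 by (simp add: fps_inv_right)
  ultimately have "(D oo fps_inv (F 0)) + (fps_deriv (F 0) oo fps_inv (F 0)) * D' = 0"
    using dfps_unique dfps_const by metis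
  then show ?thesis using D' by blast
qed

section \<open>R-transform algebra\<close>

lemma X_shift: "(a :: complex fps) $ 0 = 0 \<Longrightarrow> a = fps_X * fps_shift 1 a"
  by (intro fps_ext) auto

lemma fps_inv_nth0 [simp]: "fps_inv (a :: complex fps) $ 0 = 0"
  by (simp add: fps_inv_def)

lemma fps_inv_nth1: "fps_inv (a :: complex fps) $ 1 = 1 / a $ 1"
  by (simp add: fps_inv_def)

lemma gfps_nth: "gfps nu $ n = (if n = 0 then 0 else nu (n - 1))"
  by (simp add: gfps_def)

lemma X_cancel: "fps_X * (a :: complex fps) = fps_X * b \<Longrightarrow> a = b"
  by simp

lemma rtr_key:
  assumes nu0: "nu 0 = 1"
  shows "inverse (fps_shift 1 (fps_inv (gfps nu))) = 1 + fps_X * Rtr nu"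
proof -
  define g where "g = gfps nu"
  define h where "h = fps_inv g"
  define A where "A = Abs_fps nu"
  define h1 where "h1 = fps_shift 1 h"
  have g0: "g $ 0 = 0" and g1: "g $ 1 = 1" using nu0 by (simp_all add: g_def gfps_nth)
  have h0: "h $ 0 = 0" by (simp add: h_def)
  have hh: "h = fps_X * h1" unfolding h1_def by (rule X_shift[OF h0])
  have h1_0: "h1 $ 0 = 1" using g1 fps_inv_nth1[of g] by (simp add: h1_def h_def)
  have A0: "A $ 0 = 1" using nu0 by (simp add: A_def)
  have gX: "g = fps_X * A" by (simp add: g_def A_def gfps_def)
  have "fps_X = g oo h" using fps_inv_right[OF g0] g1 by (simp add: h_def)
  also have "\<dots> = h * (A oo h)" by (simp add: gX fps_compose_mult_distrib[OF h0] h0)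
  finally have "fps_X * 1 = fps_X * (h1 * (A oo h))" by (simp add: hh mult.assoc)
  then have hA: "h1 * (A oo h) = 1" by (metis X_cancel)
  have Aoh0: "(A oo h) $ 0 \<noteq> 0" using A0 by (simp add: fps_compose_nth)
  have invAoh: "inverse (A oo h) = h1"
    using hA by (metis Aoh0 fps_inverse_unique mult.commute)
  define r where "r = fps_shift 1 (1 - inverse A)"
  have Xr: "fps_X * r = 1 - inverse A"
    unfolding r_def by (rule X_shift[symmetric]) (simp add: A0)
  have R: "Rtr nu = r oo h" by (simp add: Rtr_def r_def A_def g_def h_def)
  have "h * Rtr nu = (fps_X * r) oo h"
    by (simp add: R fps_compose_mult_distrib[OF h0] h0)
  also have "\<dots> = 1 - inverse (A oo h)"
    by (simp add: Xr fps_compose_sub_distrib fps_inverse_compose[OF h0] A0)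
  finally have "h * Rtr nu = 1 - h1" by (simp add: invAoh)
  then have "fps_X * (h1 * Rtr nu) = 1 - h1" by (simp add: hh mult.assoc)
  then have "h1 * (1 + fps_X * Rtr nu) = 1"
    by (simp add: algebra_simps)
  then have "inverse h1 = 1 + fps_X * Rtr nu"
    using h1_0 by (metis fps_inverse_unique)
  then show ?thesis by (simp add: h1_def h_def g_def)
qed

lemma shift_inv_gfps0:
  assumes "nu 0 = 1"
  shows "fps_shift 1 (fps_inv (gfps nu)) $ 0 = 1"
  using assms fps_inv_nth1[of "gfps nu"] by (simp add: gfps_nth)

lemma rtr_inj:
  assumes nu0: "nu 0 = 1" and mu0: "mu 0 = 1" and eq: "Rtr nu = Rtr mu"
  shows "nu = mu"
proof -
  have "inverse (fps_shift 1 (fps_inv (gfps nu))) = inverse (fps_shift 1 (fps_inv (gfps mu)))"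
    using rtr_key[of nu, OF nu0] rtr_key[of mu, OF mu0] eq by simp
  then have "fps_shift 1 (fps_inv (gfps nu)) = fps_shift 1 (fps_inv (gfps mu))"
    by (metis fps_inverse_idempotent shift_inv_gfps0[of nu, OF nu0] shift_inv_gfps0[of mu, OF mu0] zero_neq_one)
  then have "fps_inv (gfps nu) = fps_inv (gfps mu)"
    by (metis X_shift fps_inv_nth0)
  then have "fps_inv (fps_inv (gfps nu)) = fps_inv (fps_inv (gfps mu))" by simp
  then have "gfps nu = gfps mu"
    using nu0 mu0 by (simp add: fps_inv_idempotent gfps_nth)
  then show ?thesis
    by (metis (no_types, lifting) diff_Suc_1 gfps_nth nat.distinct(1) ext)
qed

definition Phi :: "complex fps \<Rightarrow> functional" where
  "Phi R = (\<lambda>n. fps_inv (fps_X * inverse (1 + fps_X * R)) $ Suc n)"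

lemma Phi_props:
  shows "Phi R 0 = 1" and "gfps (Phi R) = fps_inv (fps_X * inverse (1 + fps_X * R))"
    and "Rtr (Phi R) = R"
proof -
  define H where "H = fps_X * inverse (1 + fps_X * R)"
  have H0: "H $ 0 = 0" and H1: "H $ 1 = 1" by (simp_all add: H_def)
  show P0: "Phi R 0 = 1" using fps_inv_nth1[of H] H1 by (simp add: Phi_def H_def[symmetric])
  show G: "gfps (Phi R) = fps_inv H"
    by (intro fps_ext) (simp add: gfps_nth Phi_def H_def)
  have "inverse (fps_shift 1 (fps_inv (gfps (Phi R)))) = 1 + fps_X * Rtr (Phi R)"
    by (rule rtr_key[of "Phi R", OF P0])
  moreover have "fps_inv (gfps (Phi R)) = H"
    unfolding G using H0 H1 by (simp add: fps_inv_idempotent)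
  moreover have "fps_shift 1 H = inverse (1 + fps_X * R)"
    unfolding H_def by (metis fps_shift_times_fps_X' mult.commute)
  ultimately have "1 + fps_X * R = 1 + fps_X * Rtr (Phi R)"
    by (simp add: fps_inverse_idempotent)
  then show "Rtr (Phi R) = R" by simp
qed

lemma fconv_eq:
  assumes "tau 0 = 1" "nu 0 = 1"
  shows "fconv tau nu = Phi (Rtr tau + Rtr nu)"
  unfolding fconv_def
proof (rule the_equality)
  show "Phi (Rtr tau + Rtr nu) 0 = 1 \<and> Rtr (Phi (Rtr tau + Rtr nu)) = Rtr tau + Rtr nu"
    by (simp add: Phi_props)
next
  fix lam assume "lam 0 = 1 \<and> Rtr lam = Rtr tau + Rtr nu"
  then show "lam = Phi (Rtr tau + Rtr nu)"
    by (intro rtr_inj) (simp_all add: Phi_props)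
qed

lemma X2_shift: "(a :: complex fps) $ 0 = 0 \<Longrightarrow> a $ 1 = 0 \<Longrightarrow> a = fps_X ^ 2 * fps_shift 2 a"
proof (intro fps_ext)
  fix n assume "a $ 0 = 0" "a $ 1 = 0"
  then show "a $ n = (fps_X ^ 2 * fps_shift 2 a) $ n"
    by (cases n; cases "n - 1") (auto simp: power2_eq_square mult.assoc)
qed

lemma key_algebra:
  fixes gt gV Dh Rs DG :: "complex fps"
  assumes gt0: "gt $ 0 = 0" and gt1: "gt $ 1 = 1" and gV0: "gV $ 0 = 0" and gV1: "gV $ 1 = 0"
    and Dh0: "Dh $ 0 = 0"
  defines "h0 \<equiv> fps_inv gt"
  defines "h1 \<equiv> fps_shift 1 h0"
  defines "k0 \<equiv> fps_X * Rs + inverse h1"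
  defines "H0 \<equiv> fps_X * inverse k0"
  defines "G0 \<equiv> fps_inv H0"
  defines "Dk \<equiv> - fps_shift 1 Dh * inverse h1 ^ 2"
  defines "DH \<equiv> fps_X * (- Dk * inverse k0 ^ 2)"
  assumes R1: "(gV oo h0) + (fps_deriv gt oo h0) * Dh = 0"
    and R2: "(DH oo G0) + (fps_deriv H0 oo G0) * DG = 0"
  shows "DG = fps_X ^ 2 * ((fps_shift 2 gV oo (h0 oo G0)) * fps_deriv (h0 oo G0))"
proof -
  define Dh1 where "Dh1 = fps_shift 1 Dh"
  define Ft where "Ft = h0 oo G0"
  have h00: "h0 $ 0 = 0" by (simp add: h0_def)
  have h01: "h0 $ 1 = 1" using fps_inv_nth1[of gt] gt1 by (simp add: h0_def)
  have hh: "h0 = fps_X * h1" unfolding h1_def by (rule X_shift[OF h00])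
  have h10: "h1 $ 0 = 1" using h01 by (simp add: h1_def)
  have k00: "k0 $ 0 = 1" using h10 by (simp add: k0_def)
  have H00: "H0 $ 0 = 0" and H01: "H0 $ 1 = 1" using k00 by (simp_all add: H0_def)
  have G00: "G0 $ 0 = 0" by (simp add: G0_def)
  have G01: "G0 $ 1 = 1" using fps_inv_nth1[of H0] H01 by (simp add: G0_def)
  have Dhh: "Dh = fps_X * Dh1" unfolding Dh1_def by (rule X_shift[OF Dh0])
  have HG: "H0 oo G0 = fps_X" unfolding G0_def by (rule fps_inv_right[OF H00]) (use H01 in simp)
  have gh: "gt oo h0 = fps_X" unfolding h0_def by (rule fps_inv_right[OF gt0]) (use gt1 in simp)
  have Ft0: "Ft $ 0 = 0" by (simp add: Ft_def fps_compose_nth h00)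
  have Ft1: "Ft $ 1 = 1" using h01 G01 h00 by (simp add: Ft_def fps_compose_nth numeral_2_eq_2)
  have a: "fps_X * DH * h1 ^ 2 = Dh1 * H0 ^ 2"
  proof -
    have "inverse h1 * h1 = 1" using h10 by (simp add: inverse_mult_eq_1)
    then have "inverse h1 ^ 2 * h1 ^ 2 = 1" by (metis power_mult_distrib power_one)
    then show ?thesis
      unfolding DH_def Dk_def H0_def Dh1_def[symmetric]
      by (simp add: algebra_simps power2_eq_square)
  qed
  have b: "G0 * (DH oo G0) * (h1 oo G0) ^ 2 = (Dh1 oo G0) * fps_X ^ 2"
  proof -
    have "(fps_X * DH * h1 ^ 2) oo G0 = (Dh1 * H0 ^ 2) oo G0" using a by simp
    then show ?thesis
      by (simp add: fps_compose_mult_distrib[OF G00] fps_compose_power[OF G00, symmetric] HG G00)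
  qed
  have FtG: "Ft = G0 * (h1 oo G0)"
    by (simp add: Ft_def hh fps_compose_mult_distrib[OF G00] G00)
  have DhG: "Dh oo G0 = G0 * (Dh1 oo G0)"
    by (simp add: Dhh fps_compose_mult_distrib[OF G00] G00)
  have b2: "Ft ^ 2 * (DH oo G0) = (Dh oo G0) * fps_X ^ 2"
  proof -
    have "G0 * (G0 * (DH oo G0) * (h1 oo G0) ^ 2) = G0 * ((Dh1 oo G0) * fps_X ^ 2)" using b by simp
    then show ?thesis unfolding FtG DhG by (simp add: algebra_simps power2_eq_square)
  qed
  have c: "(gV oo Ft) + (fps_deriv gt oo Ft) * (Dh oo G0) = 0"
  proof -
    have "((gV oo h0) + (fps_deriv gt oo h0) * Dh) oo G0 = 0" using R1 by simp
    then show ?thesis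
      by (simp add: fps_compose_add_distrib fps_compose_mult_distrib[OF G00] Ft_def fps_compose_assoc[OF G00 h00])
  qed
  have gFt: "gt oo Ft = G0"
    by (simp add: Ft_def fps_compose_assoc[OF G00 h00] gh G00)
  have d: "fps_deriv G0 = (fps_deriv gt oo Ft) * fps_deriv Ft"
    using fps_compose_deriv[OF Ft0, of gt] gFt by simp
  have e: "(fps_deriv H0 oo G0) * fps_deriv G0 = 1"
    using fps_compose_deriv[OF G00, of H0] HG by simp
  have DG: "DG = - (DH oo G0) * fps_deriv G0"
  proof -
    have "((DH oo G0) + (fps_deriv H0 oo G0) * DG) * fps_deriv G0 = 0" using R2 by simp
    then have "(DH oo G0) * fps_deriv G0 + DG * ((fps_deriv H0 oo G0) * fps_deriv G0) = 0"
      by (simp add: algebra_simps)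
    then show ?thesis using e by (simp add: eq_neg_iff_add_eq_0 add.commute)
  qed
  have gVW: "gV = fps_X ^ 2 * fps_shift 2 gV" by (rule X2_shift[OF gV0 gV1])
  have gVFt: "gV oo Ft = Ft ^ 2 * (fps_shift 2 gV oo Ft)"
    by (subst gVW) (simp add: fps_compose_mult_distrib[OF Ft0] fps_compose_power[OF Ft0, symmetric] Ft0)
  have "Ft ^ 2 * DG = - (Ft ^ 2 * (DH oo G0)) * fps_deriv G0"
    by (simp add: DG)
  also have "\<dots> = - ((Dh oo G0) * fps_X ^ 2) * ((fps_deriv gt oo Ft) * fps_deriv Ft)"
    by (simp add: b2 d)
  also have "\<dots> = - ((fps_deriv gt oo Ft) * (Dh oo G0)) * fps_X ^ 2 * fps_deriv Ft"
    by (simp add: algebra_simps)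
  also have "\<dots> = (gV oo Ft) * fps_X ^ 2 * fps_deriv Ft"
  proof -
    have "- ((fps_deriv gt oo Ft) * (Dh oo G0)) = gV oo Ft"
      using c by (metis add.commute add_eq_0_iff)
    then show ?thesis by simp
  qed
  also have "\<dots> = Ft ^ 2 * (fps_X ^ 2 * ((fps_shift 2 gV oo Ft) * fps_deriv Ft))"
    by (simp add: gVFt algebra_simps)
  finally have "Ft ^ 2 * DG = Ft ^ 2 * (fps_X ^ 2 * ((fps_shift 2 gV oo Ft) * fps_deriv Ft))" .
  moreover have "Ft ^ 2 \<noteq> 0"
  proof
    assume "Ft ^ 2 = 0" then have "Ft = 0" by simp
    then show False using Ft1 by simp
  qed
  ultimately show ?thesis unfolding Ft_def by simp
qed

section \<open>Derivative of the free convolution\<close>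

lemma deriv_fconv:
  assumes s0: "sig 0 = 1" and t0: "tau 0 = 1" and V0: "V 0 = 0"
  shows "\<exists>DG. (\<forall>k. ((\<lambda>e. fconv sig (\<lambda>i. tau i + e * V i) k) has_field_derivative DG $ Suc k) (at 0)) \<and>
    DG = fps_X ^ 2 * ((fps_shift 2 (gfps V) oo (fps_inv (gfps tau) oo gfps (fconv sig tau)))
            * fps_deriv (fps_inv (gfps tau) oo gfps (fconv sig tau)))"
proof -
  define g where "g e = gfps tau + fps_const e * gfps V" for e
  have gfe: "gfps (\<lambda>i. tau i + e * V i) = g e" for e
    by (intro fps_ext) (simp add: g_def gfps_nth)
  have dg: "dfps g (gfps V)" unfolding g_def by (rule dfps_lin)
  have g0: "g e $ 0 = 0" and g1: "g e $ 1 = 1" for e using t0 V0 by (simp_all add: g_def gfps_nth)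
  have gz: "g 0 = gfps tau" by (simp add: g_def)
  obtain Dh where dh: "dfps (\<lambda>e. fps_inv (g e)) Dh"
    and R1: "(gfps V oo fps_inv (g 0)) + (fps_deriv (g 0) oo fps_inv (g 0)) * Dh = 0"
    using dfps_fps_inv[OF g0 g1 dg] by blast
  have Dh0: "Dh $ 0 = 0" by (rule dfps_const_nth[OF dh]) simp
  define h1 where "h1 e = fps_shift 1 (fps_inv (g e))" for e
  have dh1: "dfps h1 (fps_shift 1 Dh)" unfolding h1_def by (rule dfps_shift[OF dh])
  have h10: "h1 e $ 0 = 1" for e using fps_inv_nth1[of "g e"] g1[of e] by (simp add: h1_def)
  define k where "k e = fps_X * Rtr sig + inverse (h1 e)" for e
  have dk: "dfps k (- fps_shift 1 Dh * inverse (h1 0) ^ 2)"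
    using dfps_add[OF dfps_const[of "fps_X * Rtr sig"] dfps_inverse[OF h10 dh1]] by (simp add: k_def[abs_def])
  have k0: "k e $ 0 = 1" for e using h10[of e] by (simp add: k_def)
  define H where "H e = fps_X * inverse (k e)" for e
  have dH: "dfps H (fps_X * (- (- fps_shift 1 Dh * inverse (h1 0) ^ 2) * inverse (k 0) ^ 2))"
    using dfps_mult[OF dfps_const[of fps_X] dfps_inverse[OF k0 dk]] by (simp add: H_def[abs_def])
  have H0: "H e $ 0 = 0" and H1: "H e $ 1 = 1" for e using k0[of e] by (simp_all add: H_def)
  obtain DG where dG: "dfps (\<lambda>e. fps_inv (H e)) DG"
    and R2: "((fps_X * (- (- fps_shift 1 Dh * inverse (h1 0) ^ 2) * inverse (k 0) ^ 2)) oo fps_inv (H 0))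
             + (fps_deriv (H 0) oo fps_inv (H 0)) * DG = 0"
    using dfps_fps_inv[OF H0 H1 dH] by blast
  have unit: "(\<lambda>i. tau i + e * V i) 0 = 1" for e using t0 V0 by simp
  have fc: "fconv sig (\<lambda>i. tau i + e * V i) n = fps_inv (H e) $ Suc n" for e n
  proof -
    have "1 + fps_X * (Rtr sig + Rtr (\<lambda>i. tau i + e * V i)) = fps_X * Rtr sig + (1 + fps_X * Rtr (\<lambda>i. tau i + e * V i))"
      by (simp add: algebra_simps)
    also have "\<dots> = k e"
      using rtr_key[of "\<lambda>i. tau i + e * V i", OF unit] by (simp add: k_def h1_def gfe)
    finally show ?thesis
      by (simp add: fconv_eq[of sig "\<lambda>i. tau i + e * V i", OF s0 unit] Phi_def H_def)
  qed
  have fc0: "gfps (fconv sig tau) = fps_inv (H 0)"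
  proof -
    have "fconv sig tau n = fps_inv (H 0) $ Suc n" for n using fc[of 0 n] by simp
    then show ?thesis by (intro fps_ext) (auto simp: gfps_nth gr0_conv_Suc)
  qed
  have deriv: "((\<lambda>e. fconv sig (\<lambda>i. tau i + e * V i) k) has_field_derivative DG $ Suc k) (at 0)" for k
    using dG unfolding dfps_def fc by simp
  have "DG = fps_X ^ 2 * ((fps_shift 2 (gfps V) oo (fps_inv (gfps tau) oo fps_inv (H 0)))
            * fps_deriv (fps_inv (gfps tau) oo fps_inv (H 0)))"
    unfolding H_def k_def h1_def gz
    apply (rule key_algebra[where Dh = Dh])
    using t0 V0 Dh0 R1 R2 by (simp_all add: gfps_nth gz H_def k_def h1_def)
  then show ?thesis using deriv fc0 by auto
qed

section \<open>Coefficients of the resolvent series\<close>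

lemma wF_Ft:
  assumes ms0: "ms 0 = 1" and mt0: "mt 0 = 1"
  shows "(fps_inv (gfps ms) oo gfps mt) * wF ms mt = fps_X"
proof -
  define g where "g = gfps mt"
  define A where "A = Abs_fps mt"
  define R where "R = Rtr ms"
  define h where "h = fps_inv (gfps ms)"
  define h1 where "h1 = fps_shift 1 h"
  have g0: "g $ 0 = 0" by (simp add: g_def gfps_nth)
  have gX: "g = fps_X * A" by (simp add: g_def A_def gfps_def)
  have A0: "A $ 0 = 1" using mt0 by (simp add: A_def)
  have h0: "h $ 0 = 0" by (simp add: h_def)
  have hh: "h = fps_X * h1" unfolding h1_def by (rule X_shift[OF h0])
  have h10: "h1 $ 0 = 1" using shift_inv_gfps0[of ms, OF ms0] by (simp add: h1_def h_def)
  have key: "inverse h1 = 1 + fps_X * R" using rtr_key[of ms, OF ms0] by (simp add: h1_def h_def R_def)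
  have "inverse (h1 oo g) = 1 + g * (R oo g)"
    using key fps_inverse_compose[OF g0, of h1] h10
    by (simp add: fps_compose_add_distrib fps_compose_mult_distrib[OF g0] g0)
  then have hg: "(h1 oo g) * (1 + g * (R oo g)) = 1"
    by (metis fps_compose_nth_0 h10 inverse_mult_eq_1' zero_neq_one)
  have wF: "wF ms mt = inverse A + fps_X * (R oo g)" by (simp add: wF_def A_def R_def g_def)
  have "A * wF ms mt = 1 + g * (R oo g)"
    using A0 by (simp add: wF distrib_left gX inverse_mult_eq_1' mult.assoc)
  have hog: "h oo g = g * (h1 oo g)" by (simp add: hh fps_compose_mult_distrib[OF g0] g0)
  have "(h oo g) * wF ms mt = fps_X * ((h1 oo g) * (A * wF ms mt))"
    unfolding hog by (simp add: gX mult_ac)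
  also have "\<dots> = fps_X" using hg \<open>A * wF ms mt = 1 + g * (R oo g)\<close> by simp
  finally show ?thesis by (simp add: h_def g_def)
qed

definition cm :: "nat \<Rightarrow> complex poly fps \<Rightarrow> complex fps" where
  "cm m Y = Abs_fps (\<lambda>n. coeff (Y $ n) m)"

lemma cm_eq: "(\<And>m. cm m Y = cm m Z) \<Longrightarrow> Y = Z"
  unfolding cm_def by (metis fps_ext fps_nth_Abs_fps poly_eqI)

lemma cm_lift_mult: "cm m (Abs_fps (\<lambda>n. [:a $ n:]) * Y) = a * cm m Y"
  unfolding cm_def by (intro fps_ext) (simp add: fps_mult_nth coeff_sum)

lemma cm_X_mult: "cm m (fps_X * fps_const [:0, 1:] * Y) = (if m = 0 then 0 else fps_X * cm (m - 1) Y)"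
  unfolding cm_def by (intro fps_ext) (auto simp: mult.assoc mult_pCons_left coeff_pCons split: nat.split)

lemma cm_one: "cm m 1 = (if m = 0 then 1 else 0)"
  unfolding cm_def by (intro fps_ext) (auto simp: fps_one_nth)

lemma cm_diff: "cm m (Y - Z) = cm m Y - cm m Z"
  unfolding cm_def by (intro fps_ext) simp

lemma resF_coeff:
  assumes ms0: "ms 0 = 1" and mt0: "mt 0 = 1"
  shows "coeff (resF ms mt $ i) m = ((fps_inv (gfps ms) oo gfps mt) ^ Suc m) $ Suc i"
proof -
  define Ft where "Ft = fps_inv (gfps ms) oo gfps mt"
  define F1 where "F1 = fps_shift 1 Ft"
  define w where "w = wF ms mt"
  have Ft0: "Ft $ 0 = 0" by (simp add: Ft_def fps_compose_nth)
  have FtX: "Ft = fps_X * F1" unfolding F1_def by (rule X_shift[OF Ft0])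
  have F1w: "F1 * w = 1"
    using wF_Ft[of ms mt, OF ms0 mt0] by (simp add: FtX Ft_def[symmetric] w_def mult.assoc)
  define f :: "complex poly fps" where "f = Abs_fps (\<lambda>n. [:w $ n:]) - fps_X * fps_const [:0, 1:]"
  define C :: "complex poly fps" where
    "C = Abs_fps (\<lambda>i. \<Sum>j\<le>i. monom ((fps_X ^ j * F1 ^ Suc j) $ i) j)"
  have cmC: "cm m C = fps_X ^ m * F1 ^ Suc m" for m
    unfolding cm_def C_def
    by (intro fps_ext) (auto simp: coeff_sum fps_X_power_mult_nth)
  have fC: "f * C = 1"
  proof (rule cm_eq)
    fix m
    show "cm m (f * C) = cm m 1"
    proof (cases m)
      case 0
      have "w * F1 = 1" using F1w by (simp add: mult.commute)
      then show ?thesis using 0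
        by (simp add: f_def left_diff_distrib cm_diff cm_lift_mult cm_X_mult cm_one cmC)
    next
      case (Suc j)
      have "w * (fps_X ^ Suc j * F1 ^ Suc (Suc j)) - fps_X * (fps_X ^ j * F1 ^ Suc j)
            = fps_X ^ Suc j * F1 ^ Suc j * (F1 * w - 1)"
        by (simp add: algebra_simps)
      then show ?thesis using Suc F1w
        by (simp add: f_def left_diff_distrib cm_diff cm_lift_mult cm_X_mult cm_one cmC)
    qed
  qed
  have w0: "w $ 0 = 1"
  proof -
    have "(F1 * w) $ 0 = 1" using F1w by simp
    moreover have "F1 $ 0 = 1"
      using fps_inv_nth1[of "gfps ms"] ms0 mt0
      by (simp add: F1_def Ft_def fps_compose_nth gfps_nth numeral_2_eq_2)
    ultimately show ?thesis by simp
  qed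
  have fR: "f * resF ms mt = 1"
    unfolding resF_def w_def[symmetric] f_def
    by (rule fps_right_inverse) (simp add: w0 one_pCons)
  have "resF ms mt = C"
  proof -
    have "resF ms mt = (C * f) * resF ms mt" using fC by (simp add: mult.commute)
    also have "\<dots> = C" using fR by (simp add: mult.assoc)
    finally show ?thesis .
  qed
  then have "coeff (resF ms mt $ i) m = (fps_X ^ m * F1 ^ Suc m) $ i"
    using cmC[of m] unfolding cm_def by (metis fps_nth_Abs_fps)
  also have "\<dots> = (Ft ^ Suc m) $ Suc i"
  proof -
    have "Ft ^ Suc m = fps_X * (fps_X ^ m * F1 ^ Suc m)"
      unfolding FtX power_mult_distrib by (simp only: power_Suc mult_ac)
    then show ?thesis by simp
  qed
  finally show ?thesis by (simp add: Ft_def)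
qed

lemma pair_ext: "degree p \<le> N \<Longrightarrow> pair nu p = (\<Sum>i\<le>N. coeff p i * nu i)"
  unfolding pair_def by (rule sum.mono_neutral_left) (auto simp: coeff_eq_0)

lemma pair_ident:
  fixes tau lam V :: functional and Q L :: "complex poly"
  assumes tau0: "tau 0 = 1" and lam0: "lam 0 = 1" and V0: "V 0 = 0"
    and mart: "pderiv L = Kop tau lam (pderiv Q)"
  shows "pair (\<lambda>j. (fps_X ^ 2 * ((fps_shift 2 (gfps V) oo (fps_inv (gfps tau) oo gfps lam))
            * fps_deriv (fps_inv (gfps tau) oo gfps lam))) $ Suc j) Q = pair V L"
proof -
  define Ft where "Ft = fps_inv (gfps tau) oo gfps lam"
  define P where "P = Abs_fps (\<lambda>m. if m = 0 then 0 else V m / of_nat m)"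
  define N' where "N' = degree Q + degree L"
  define N where "N = Suc N'"
  define S where "S m = (\<Sum>j\<le>N. of_nat j * coeff Q j * (Ft ^ m) $ j)" for m
  have Ft0: "Ft $ 0 = 0" by (simp add: Ft_def fps_compose_nth)
  have dP: "fps_deriv P = fps_shift 2 (gfps V)"
    by (intro fps_ext) (simp add: P_def gfps_nth fps_deriv_nth del: of_nat_Suc)
  have DG: "fps_X ^ 2 * ((fps_shift 2 (gfps V) oo Ft) * fps_deriv Ft) = fps_X ^ 2 * fps_deriv (P oo Ft)"
    by (simp add: fps_compose_deriv[OF Ft0] dP)
  have Dj: "(fps_X ^ 2 * fps_deriv (P oo Ft)) $ Suc j = of_nat j * (\<Sum>m\<le>N. P $ m * (Ft ^ m) $ j)"
    if j: "j \<le> N" for j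
  proof -
    have "(fps_X ^ 2 * fps_deriv (P oo Ft)) $ Suc j = of_nat j * (P oo Ft) $ j"
      by (cases j) (auto simp: fps_X_power_mult_nth fps_deriv_nth fps_compose_nth P_def)
    also have "(P oo Ft) $ j = (\<Sum>m\<le>N. P $ m * (Ft ^ m) $ j)"
      unfolding fps_compose_nth atLeast0AtMost
      by (rule sum.mono_neutral_left) (use j startsby_zero_power_prefix[OF Ft0] in auto)
    finally show ?thesis .
  qed
  have LHS: "pair (\<lambda>j. (fps_X ^ 2 * ((fps_shift 2 (gfps V) oo Ft) * fps_deriv Ft)) $ Suc j) Q
      = (\<Sum>j\<le>N. \<Sum>m\<le>N. P $ m * (of_nat j * coeff Q j * (Ft ^ m) $ j))"
  proof -
    have "pair (\<lambda>j. (fps_X ^ 2 * ((fps_shift 2 (gfps V) oo Ft) * fps_deriv Ft)) $ Suc j) Q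
        = (\<Sum>j\<le>N. coeff Q j * (fps_X ^ 2 * fps_deriv (P oo Ft)) $ Suc j)"
      unfolding DG by (rule pair_ext) (simp add: N_def N'_def)
    also have "\<dots> = (\<Sum>j\<le>N. \<Sum>m\<le>N. P $ m * (of_nat j * coeff Q j * (Ft ^ m) $ j))"
    proof (rule sum.cong[OF refl])
      fix j assume "j \<in> {..N}"
      then have "(fps_X ^ 2 * fps_deriv (P oo Ft)) $ Suc j = of_nat j * (\<Sum>m\<le>N. P $ m * (Ft ^ m) $ j)"
        by (intro Dj) simp
      then show "coeff Q j * (fps_X ^ 2 * fps_deriv (P oo Ft)) $ Suc j = (\<Sum>m\<le>N. P $ m * (of_nat j * coeff Q j * (Ft ^ m) $ j))"
        by (simp add: sum_distrib_left mult_ac)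
    qed
    finally show ?thesis .
  qed
  have tm: "coeff L m * V m = P $ m * S m" if m: "m \<le> N" for m
  proof (cases m)
    case 0
    then show ?thesis using V0 by (simp add: P_def)
  next
    case (Suc m')
    have "coeff (pderiv L) m' = (\<Sum>i\<le>degree (pderiv Q). coeff (pderiv Q) i * coeff (resF tau lam $ i) m')"
      unfolding mart Kop_def by (simp add: coeff_sum)
    also have "\<dots> = (\<Sum>i\<le>degree (pderiv Q). coeff (pderiv Q) i * (Ft ^ m) $ Suc i)"
      by (simp add: resF_coeff[of tau lam, OF tau0 lam0] Ft_def Suc)
    also have "\<dots> = (\<Sum>i\<le>N'. coeff (pderiv Q) i * (Ft ^ m) $ Suc i)"
      by (rule sum.mono_neutral_left) (auto simp: N'_def coeff_eq_0 degree_pderiv)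
    also have "\<dots> = (\<Sum>i\<le>N'. of_nat (Suc i) * coeff Q (Suc i) * (Ft ^ m) $ Suc i)"
      by (simp add: coeff_pderiv)
    also have "\<dots> = S m"
      unfolding S_def N_def by (subst sum.atMost_Suc_shift) simp
    finally have "coeff (pderiv L) m' = S m" .
    then have "of_nat (Suc m') * coeff L (Suc m') = S m" by (simp add: coeff_pderiv)
    then show ?thesis using Suc by (simp add: P_def field_simps del: of_nat_Suc)
  qed
  have RHS: "pair V L = (\<Sum>m\<le>N. P $ m * S m)"
    by (subst pair_ext[of L N]) (auto simp: N_def N'_def tm intro!: sum.cong)
  show ?thesis
    unfolding Ft_def[symmetric] LHS RHS S_def sum_distrib_left
    by (rule sum.swap)
qed

section \<open>Linear algebra on polynomials\<close>

lemma pair_add: "pair nu (p + q) = pair nu p + pair nu q"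
proof -
  define N where "N = max (degree p) (degree q)"
  have "degree (p + q) \<le> N" unfolding N_def by (rule degree_add_le) auto
  then show ?thesis
    using pair_ext[of p N nu] pair_ext[of q N nu] pair_ext[of "p + q" N nu]
    by (simp add: N_def sum.distrib distrib_right)
qed

lemma pair_smult: "pair nu (smult a p) = a * pair nu p"
  using pair_ext[of "smult a p" "degree p" nu]
  by (simp add: pair_def sum_distrib_left mult.assoc)

lemma pair_zero: "pair nu 0 = 0"
  by (simp add: pair_def)

lemma pair_sum: "pair nu (\<Sum>k\<in>A. f k) = (\<Sum>k\<in>A. pair nu (f k))"
  by (induction A rule: infinite_finite_induct) (simp_all add: pair_zero pair_add)

lemma pair_monom: "pair nu (monom 1 i) = nu i"
  using pair_ext[of "monom 1 i" i nu] by (simp add: degree_monom_le mult_delta_left sum.delta)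

lemma pair_one: "pair nu 1 = nu 0"
  by (simp add: pair_def)

lemma func_eq_basis:
  assumes B: "is_basis_family B" and eq: "\<And>k. pair a (B k) = pair b (B k)"
  shows "a = b"
proof
  fix i
  obtain c N where cN: "monom 1 i = (\<Sum>k\<le>N. smult (c k) (B k))"
    using B unfolding is_basis_family_def by blast
  have "a i = pair a (monom 1 i)" by (simp add: pair_monom)
  also have "\<dots> = (\<Sum>k\<le>N. c k * pair a (B k))" unfolding cN by (simp add: pair_sum pair_smult)
  also have "\<dots> = (\<Sum>k\<le>N. c k * pair b (B k))" by (simp add: eq)
  also have "\<dots> = pair b (monom 1 i)" unfolding cN by (simp add: pair_sum pair_smult)
  also have "\<dots> = b i" by (simp add: pair_monom)
  finally show "a i = b i" .
qed

lemma sum_extend: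
  fixes B :: "nat \<Rightarrow> complex poly"
  assumes "m \<le> M"
  shows "(\<Sum>k\<le>m. smult (c k) (B k)) = (\<Sum>k\<le>M. smult (if k \<le> m then c k else 0) (B k))"
proof -
  have "(\<Sum>k\<le>m. smult (c k) (B k)) = (\<Sum>k\<le>m. smult (if k \<le> m then c k else 0) (B k))"
    by simp
  also have "\<dots> = (\<Sum>k\<le>M. smult (if k \<le> m then c k else 0) (B k))"
    by (rule sum.mono_neutral_left) (use assms in auto)
  finally show ?thesis .
qed

lemma basis_from_degrees:
  fixes B :: "nat \<Rightarrow> complex poly"
  assumes deg: "\<And>k. degree (B k) = k" and nz: "\<And>k. B k \<noteq> 0"
  shows "is_basis_family B"
proof -
  have span: "\<exists>c. q = (\<Sum>k\<le>degree q. smult (c k) (B k))" for q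
  proof (induction "degree q" arbitrary: q rule: less_induct)
    case less
    define d where "d = degree q"
    define a where "a = lead_coeff q / lead_coeff (B d)"
    define q' where "q' = q - smult a (B d)"
    have lB: "lead_coeff (B d) \<noteq> 0" using nz by simp
    have "coeff q' d = lead_coeff q - a * lead_coeff (B d)"
      using deg[of d] by (simp add: q'_def d_def)
    then have cq': "coeff q' d = 0"
      using lB by (simp add: a_def)
    have dq': "degree q' \<le> d"
      unfolding q'_def d_def by (rule degree_diff_le) (auto simp: deg)
    show ?case
    proof (cases "q' = 0")
      case True
      then have "q = smult a (B d)" by (simp add: q'_def)
      then show ?thesis
        by (intro exI[of _ "\<lambda>k. if k = d then a else 0"])
           (simp add: d_def[symmetric] deg if_distrib[of "\<lambda>x. smult x _"] sum.delta cong: if_cong)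
    next
      case False
      then have lt: "degree q' < d" using dq' cq' by (metis le_neq_implies_less leading_coeff_0_iff)
      obtain c' where c': "q' = (\<Sum>k\<le>degree q'. smult (c' k) (B k))"
        using less(1)[OF lt[unfolded d_def]] by blast
      have "q = q' + smult a (B d)" by (simp add: q'_def)
      also have "q' = (\<Sum>k\<le>d. smult (if k \<le> degree q' then c' k else 0) (B k))"
        using c' sum_extend[of "degree q'" d c' B] lt by simp
      finally have "q = (\<Sum>k\<le>d. smult (if k \<le> degree q' then c' k else 0) (B k)) + smult a (B d)" .
      also have "\<dots> = (\<Sum>k\<le>d. smult ((if k \<le> degree q' then c' k else 0) + (if k = d then a else 0)) (B k))"
        by (simp add: smult_add_left sum.distrib if_distrib[of "\<lambda>x. smult x _"] sum.delta cong: if_cong)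
      finally show ?thesis unfolding d_def by (rule exI[where x = "\<lambda>k. (if k \<le> degree q' then c' k else 0) + (if k = degree q then a else 0)"])
    qed
  qed
  have indep: "(\<Sum>k\<le>N. smult (c k) (B k)) = 0 \<longrightarrow> (\<forall>k\<le>N. c k = 0)" for c N
  proof (induction N)
    case 0
    then show ?case using nz[of 0] by auto
  next
    case (Suc N)
    show ?case
    proof
      assume S: "(\<Sum>k\<le>Suc N. smult (c k) (B k)) = 0"
      have "coeff (\<Sum>k\<le>Suc N. smult (c k) (B k)) (Suc N) = c (Suc N) * lead_coeff (B (Suc N))"
      proof -
        have "coeff (\<Sum>k\<le>N. smult (c k) (B k)) (Suc N) = 0"
          by (simp add: coeff_sum coeff_eq_0 deg)
        then show ?thesis by (simp add: deg)
      qed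
      moreover have "coeff (\<Sum>k\<le>Suc N. smult (c k) (B k)) (Suc N) = 0" by (simp only: S coeff_0)
      ultimately have cS: "c (Suc N) = 0" using nz[of "Suc N"] by simp
      then have "(\<Sum>k\<le>N. smult (c k) (B k)) = 0" using S by simp
      then show "\<forall>k\<le>Suc N. c k = 0" using Suc.IH cS le_Suc_eq by blast
    qed
  qed
  show ?thesis unfolding is_basis_family_def using span indep by blast
qed

theorem corollary4p6:
  fixes mu :: "real \<Rightarrow> real measure"
    and V :: "nat \<Rightarrow> real \<Rightarrow> complex poly"
    and Vs :: "nat \<Rightarrow> real \<Rightarrow> functional"
  assumes prob: "\<And>t. 0 \<le> t \<Longrightarrow> prob_space (mu t)"
    and borel: "\<And>t. 0 \<le> t \<Longrightarrow> sets (mu t) = sets borel"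
    and moments: "\<And>t n. 0 \<le> t \<Longrightarrow> integrable (mu t) (\<lambda>x. x ^ n)"
    and semigroup: "\<And>t. 0 \<le> t \<Longrightarrow>
          Rtr (mom (mu t)) = fps_const (complex_of_real t) * Rtr (mom (mu 1))"
    and fluct_mart: "\<And>n. 1 \<le> n \<Longrightarrow>
          martingale_poly (\<lambda>t. mom (mu t)) (\<lambda>t. pderiv (V n t))"
    and fluct_deg: "\<And>n t. 1 \<le> n \<Longrightarrow> 0 \<le> t \<Longrightarrow> degree (pderiv (V n t)) = n - 1"
    and dual_unit: "\<And>n t. 1 \<le> n \<Longrightarrow> 0 \<le> t \<Longrightarrow> pair (Vs n t) 1 = 0"
    and dual: "\<And>n k t. 1 \<le> n \<Longrightarrow> 1 \<le> k \<Longrightarrow> 0 \<le> t \<Longrightarrow>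
          pair (Vs n t) (V k t) = (if n = k then 1 else 0)"
  shows "(\<forall>t\<ge>0. is_basis_family (\<lambda>k. if k = 0 then 1 else V k t)) \<and>
         (\<forall>n\<ge>1. \<forall>s\<ge>0. \<forall>t\<ge>0. \<forall>k.
            ((\<lambda>\<epsilon>::complex.
                (fconv (mom (mu t)) (\<lambda>i. mom (mu s) i + \<epsilon> * Vs n s i) k
                 - fconv (mom (mu t)) (mom (mu s)) k) / \<epsilon>)
             \<longlongrightarrow> Vs n (t + s) k) (at 0))"
proof -
  have unit: "mom (mu t) 0 = 1" if "0 \<le> t" for t
    using prob[OF that] by (simp add: mom_def prob_space.prob_space)
  have degV: "degree (V k t) = k" if k: "1 \<le> k" and t: "0 \<le> t" for k t
  proof -
    have d: "degree (V k t) - 1 = k - 1" using fluct_deg[OF k t] by (simp add: degree_pderiv)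
    show ?thesis
    proof (cases "degree (V k t) = 0")
      case True
      then have k1: "k = 1" using d k by simp
      have "pair (Vs k t) (V k t) = 1" using dual[OF k k t] by simp
      moreover have "pair (Vs k t) (V k t) = coeff (V k t) 0 * Vs k t 0"
        by (simp add: pair_def True)
      moreover have "Vs k t 0 = 0" using dual_unit[OF k t] by (simp add: pair_one)
      ultimately show ?thesis by simp
    next
      case False
      then show ?thesis using d k by linarith
    qed
  qed
  have basis: "is_basis_family (\<lambda>k. if k = 0 then 1 else V k t)" if t: "0 \<le> t" for t
  proof (rule basis_from_degrees)
    show "degree (if k = 0 then 1 else V k t) = k" for k using degV[OF _ t, of k] by auto
    show "(if k = 0 then 1 else V k t) \<noteq> 0" for k using degV[OF _ t, of k] by (cases k) auto
  qed
  have conv: "fconv (mom (mu t)) (mom (mu s)) = mom (mu (t + s))" if s: "0 \<le> s" and t: "0 \<le> t" for s t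
  proof -
    have st: "0 \<le> t + s" using s t by simp
    have R: "Rtr (mom (mu t)) + Rtr (mom (mu s)) = Rtr (mom (mu (t + s)))"
    proof -
      have "fps_const (complex_of_real (t + s)) = fps_const (complex_of_real t) + fps_const (complex_of_real s)"
        by simp
      then show ?thesis using semigroup[OF s] semigroup[OF t] semigroup[OF st]
        by (simp only: distrib_right)
    qed
    show ?thesis
      unfolding fconv_eq[of "mom (mu t)" "mom (mu s)", OF unit[OF t] unit[OF s]] R
      by (rule rtr_inj) (simp_all add: Phi_props unit[OF st])
  qed
  show ?thesis
  proof (intro conjI allI impI)
    fix t :: real assume "0 \<le> t"
    then show "is_basis_family (\<lambda>k. if k = 0 then 1 else V k t)" by (rule basis)
  next
    fix n :: nat and s t :: real and k :: nat
    assume n: "1 \<le> n" and s: "0 \<le> s" and t: "0 \<le> t"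
    have W0: "Vs n s 0 = 0" using dual_unit[OF n s] by (simp add: pair_one)
    have uniteps: "(\<lambda>i. mom (mu s) i + e * Vs n s i) 0 = 1" for e using W0 unit[OF s] by simp
    show "((\<lambda>\<epsilon>::complex. (fconv (mom (mu t)) (\<lambda>i. mom (mu s) i + \<epsilon> * Vs n s i) k
                 - fconv (mom (mu t)) (mom (mu s)) k) / \<epsilon>) \<longlongrightarrow> Vs n (t + s) k) (at 0)"
    proof (cases "t = 0")
      case True
      have R0: "Rtr (mom (mu t)) = 0" using semigroup[OF t] True by simp
      have fc: "fconv (mom (mu t)) nu = nu" if "nu 0 = 1" for nu
        unfolding fconv_eq[of "mom (mu t)" nu, OF unit[OF t] that] R0
        by (rule rtr_inj) (simp_all add: Phi_props that)
      have "eventually (\<lambda>\<epsilon>. (fconv (mom (mu t)) (\<lambda>i. mom (mu s) i + \<epsilon> * Vs n s i) k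
                 - fconv (mom (mu t)) (mom (mu s)) k) / \<epsilon> = Vs n (t + s) k) (at (0::complex))"
        unfolding eventually_at_filter
        using fc[of "\<lambda>i. mom (mu s) i + _ * Vs n s i", OF uniteps] fc[of "mom (mu s)", OF unit[OF s]] True
        by (auto intro!: always_eventually)
      then show ?thesis by (subst tendsto_cong) auto
    next
      case False
      then have tpos: "0 < t" using t by simp
      obtain DG where dG: "\<And>k. ((\<lambda>e. fconv (mom (mu t)) (\<lambda>i. mom (mu s) i + e * Vs n s i) k)
            has_field_derivative DG $ Suc k) (at 0)"
        and DGeq: "DG = fps_X ^ 2 * ((fps_shift 2 (gfps (Vs n s)) oo (fps_inv (gfps (mom (mu s))) oo gfps (fconv (mom (mu t)) (mom (mu s)))))
            * fps_deriv (fps_inv (gfps (mom (mu s))) oo gfps (fconv (mom (mu t)) (mom (mu s)))))"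
        using deriv_fconv[of "mom (mu t)" "mom (mu s)" "Vs n s", OF unit[OF t] unit[OF s] W0] by blast
      have st: "0 \<le> t + s" using s t by simp
      have DGeq': "DG = fps_X ^ 2 * ((fps_shift 2 (gfps (Vs n s)) oo (fps_inv (gfps (mom (mu s))) oo gfps (mom (mu (t + s)))))
            * fps_deriv (fps_inv (gfps (mom (mu s))) oo gfps (mom (mu (t + s)))))"
        using DGeq conv[OF s t] by simp
      have Dl: "(\<lambda>j. DG $ Suc j) = Vs n (t + s)"
      proof (rule func_eq_basis[OF basis[OF st]])
        fix j
        show "pair (\<lambda>j. DG $ Suc j) (if j = 0 then 1 else V j (t + s)) = pair (Vs n (t + s)) (if j = 0 then 1 else V j (t + s))"
        proof (cases "j = 0")
          case True
          then show ?thesis using dual_unit[OF n st] by (simp add: pair_one DGeq fps_X_power_mult_nth)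
        next
          case False
          then have j: "1 \<le> j" by simp
          have mart: "pderiv (V j s) = Kop (mom (mu s)) (mom (mu (t + s))) (pderiv (V j (t + s)))"
            using fluct_mart[OF j] s tpos unfolding martingale_poly_def by simp
          have "pair (\<lambda>j. DG $ Suc j) (V j (t + s)) = pair (Vs n s) (V j s)"
            unfolding DGeq' by (rule pair_ident[of "mom (mu s)" "mom (mu (t + s))" "Vs n s", OF unit[OF s] unit[OF st] W0 mart])
          also have "\<dots> = pair (Vs n (t + s)) (V j (t + s))"
            using dual[OF n j s] dual[OF n j st] by simp
          finally show ?thesis using False by simp
        qed
      qed
      have "((\<lambda>e. fconv (mom (mu t)) (\<lambda>i. mom (mu s) i + e * Vs n s i) k) has_field_derivative Vs n (t + s) k) (at 0)"
        using dG[of k] Dl by (metis fun_cong)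
      then show ?thesis unfolding has_field_derivative_iff by simp
    qed
  qed
qed

end
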